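(* Let $G=(V,E)$ be a reduced undirected graph (parallel edges allowed) with terminals $s,t$. Every feedback edge set $F\subseteq E$ of $G$ is a tracking edge set for $G$.
   Context: An $s$-$t$ path is a simple path from $s$ to $t$. A set $T\subseteq E$ is a tracking edge set if for any two distinct $s$-$t$ paths $P_1,P_2$, the sequence of edges of $T\cap E(P_1)$ in the order traversed along $P_1$ differs from the sequence of edges of $T\cap E(P_2)$ in the order traversed along $P_2$. A graph is reduced if every vertex and every edge lies on at least one $s$-$t$ path. A feedback edge set is a set of edges whose removal makes the graph acyclic. *)

theory Defs
  imports Main
begin

(* Undirected multigraph: vertex set V, edge set E (edges are abstract objects,
   so parallel edges are allowed), and an endpoint map endp; edge e joins
   u and v iff endp e = (u,v) or endp e = (v,u). *)

definition joins :: "('e \<Rightarrow> 'v \<times> 'v) \<Rightarrow> 'e \<Rightarrow> 'v \<Rightarrow> 'v \<Rightarrow> bool" where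
  "joins endp e u v \<longleftrightarrow> endp e = (u, v) \<or> endp e = (v, u)"

definition wf_graph :: "'v set \<Rightarrow> 'e set \<Rightarrow> ('e \<Rightarrow> 'v \<times> 'v) \<Rightarrow> bool" where
  "wf_graph V E endp \<longleftrightarrow> finite V \<and> finite E \<and>
     (\<forall>e\<in>E. fst (endp e) \<in> V \<and> snd (endp e) \<in> V)"

definition walk_in :: "'e set \<Rightarrow> ('e \<Rightarrow> 'v \<times> 'v) \<Rightarrow> 'v list \<Rightarrow> 'e list \<Rightarrow> bool" where
  "walk_in E endp vs es \<longleftrightarrow> length vs = Suc (length es) \<and> set es \<subseteq> E \<and>
     (\<forall>i<length es. joins endp (es ! i) (vs ! i) (vs ! Suc i))"

definition st_path :: "'v set \<Rightarrow> 'e set \<Rightarrow> ('e \<Rightarrow> 'v \<times> 'v) \<Rightarrow> 'v \<Rightarrow> 'v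
    \<Rightarrow> 'v list \<Rightarrow> 'e list \<Rightarrow> bool" where
  "st_path V E endp s t vs es \<longleftrightarrow> walk_in E endp vs es \<and> set vs \<subseteq> V \<and>
     hd vs = s \<and> last vs = t \<and> distinct vs"

(* cycle: closed walk with at least one edge, distinct edges, distinct vertices
   apart from the repeated start/end vertex (loops and pairs of parallel edges
   are cycles) *)
definition cycle_in :: "'e set \<Rightarrow> ('e \<Rightarrow> 'v \<times> 'v) \<Rightarrow> 'v list \<Rightarrow> 'e list \<Rightarrow> bool" where
  "cycle_in E endp vs es \<longleftrightarrow> walk_in E endp vs es \<and> es \<noteq> [] \<and>
     hd vs = last vs \<and> distinct (butlast vs) \<and> distinct es"

definition acyclic_graph :: "'v set \<Rightarrow> 'e set \<Rightarrow> ('e \<Rightarrow> 'v \<times> 'v) \<Rightarrow> bool" where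
  "acyclic_graph V E endp \<longleftrightarrow> \<not> (\<exists>vs es. set vs \<subseteq> V \<and> cycle_in E endp vs es)"

definition feedback_edge_set :: "'v set \<Rightarrow> 'e set \<Rightarrow> ('e \<Rightarrow> 'v \<times> 'v) \<Rightarrow> 'e set \<Rightarrow> bool" where
  "feedback_edge_set V E endp F \<longleftrightarrow> F \<subseteq> E \<and> acyclic_graph V (E - F) endp"

definition reduced :: "'v set \<Rightarrow> 'e set \<Rightarrow> ('e \<Rightarrow> 'v \<times> 'v) \<Rightarrow> 'v \<Rightarrow> 'v \<Rightarrow> bool" where
  "reduced V E endp s t \<longleftrightarrow>
     (\<forall>v\<in>V. \<exists>vs es. st_path V E endp s t vs es \<and> v \<in> set vs) \<and>
     (\<forall>e\<in>E. \<exists>vs es. st_path V E endp s t vs es \<and> e \<in> set es)"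

definition tracking_edge_set :: "'v set \<Rightarrow> 'e set \<Rightarrow> ('e \<Rightarrow> 'v \<times> 'v) \<Rightarrow> 'v \<Rightarrow> 'v
    \<Rightarrow> 'e set \<Rightarrow> bool" where
  "tracking_edge_set V E endp s t T \<longleftrightarrow> T \<subseteq> E \<and>
     (\<forall>vs1 es1 vs2 es2. st_path V E endp s t vs1 es1 \<and> st_path V E endp s t vs2 es2 \<and>
        (vs1, es1) \<noteq> (vs2, es2) \<longrightarrow>
        filter (\<lambda>e. e \<in> T) es1 \<noteq> filter (\<lambda>e. e \<in> T) es2)"

end

theory Submission
  imports Defs
begin

definition inc :: "('e \<Rightarrow> 'v \<times> 'v) \<Rightarrow> 'e \<Rightarrow> 'v \<Rightarrow> bool" where
  "inc endp e v \<longleftrightarrow> v = fst (endp e) \<or> v = snd (endp e)"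

lemma walk_inc_idx:
  assumes "walk_in E endp vs es" "distinct vs" "i < length es" "k < length vs"
    "inc endp (es!i) (vs!k)"
  shows "k = i \<or> k = Suc i"
proof -
  have j: "joins endp (es!i) (vs!i) (vs!Suc i)" and l: "length vs = Suc (length es)"
    using assms(1,3) unfolding walk_in_def by auto
  have "vs!k = vs!i \<or> vs!k = vs!Suc i"
    using j assms(5) unfolding joins_def inc_def by auto
  then show ?thesis using assms(2,3,4) l by (auto simp: nth_eq_iff_index_eq)
qed

lemma walk_inc_in:
  assumes "walk_in E endp vs es" "e \<in> set es" "inc endp e v"
  shows "v \<in> set vs"
proof -
  obtain i where i: "i < length es" "e = es!i" using assms(2) by (metis in_set_conv_nth)
  have j: "joins endp (es!i) (vs!i) (vs!Suc i)" and l: "length vs = Suc (length es)"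
    using assms(1) i unfolding walk_in_def by auto
  have "v = vs!i \<or> v = vs!Suc i"
    using j assms(3) i unfolding joins_def inc_def by auto
  then show ?thesis using l i by (metis Suc_less_eq less_SucI nth_mem)
qed

lemma walk_distinct_es:
  assumes "walk_in E endp vs es" "distinct vs"
  shows "distinct es"
proof -
  have l: "length vs = Suc (length es)" using assms(1) unfolding walk_in_def by auto
  { fix i j assume ij: "i < j" "j < length es" "es!i = es!j"
    have "joins endp (es!j) (vs!j) (vs!Suc j)" using assms(1) ij(2) unfolding walk_in_def by blast
    hence "inc endp (es!i) (vs!j)" using ij(3) unfolding joins_def inc_def by auto
    hence "j = i \<or> j = Suc i" using walk_inc_idx[OF assms, of i j] ij l by auto
    have "i < length es" using ij by auto
    hence "joins endp (es!i) (vs!i) (vs!Suc i)" using assms(1) unfolding walk_in_def by blast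
    hence "inc endp (es!j) (vs!i)" using ij(3) unfolding joins_def inc_def by auto
    hence "i = j \<or> i = Suc j" using walk_inc_idx[OF assms, of j i] ij l by auto
    hence False using ij \<open>j = i \<or> j = Suc i\<close> by auto }
  then show ?thesis unfolding distinct_conv_nth by (metis linorder_neqE_nat)
qed

lemma walk_noloop:
  assumes "walk_in E endp vs es" "distinct vs" "e \<in> set es"
  shows "fst (endp e) \<noteq> snd (endp e)"
proof -
  obtain i where i: "i < length es" "e = es!i" using assms(3) by (metis in_set_conv_nth)
  have j: "joins endp (es!i) (vs!i) (vs!Suc i)" and l: "length vs = Suc (length es)"
    using assms(1) i unfolding walk_in_def by auto
  have "vs!i \<noteq> vs!Suc i" using assms(2) l i by (simp add: nth_eq_iff_index_eq)
  then show ?thesis using j i unfolding joins_def by auto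
qed

lemma incs_at:
  assumes "walk_in E endp vs es" "distinct vs" "k < length vs"
  shows "{e\<in>set es. inc endp e (vs!k)} =
    (if 0 < k then {es!(k-1)} else {}) \<union> (if k < length es then {es!k} else {})"
proof -
  have l: "length vs = Suc (length es)" using assms(1) unfolding walk_in_def by auto
  show ?thesis
  proof (rule set_eqI, rule iffI)
    fix e assume "e \<in> {e\<in>set es. inc endp e (vs!k)}"
    then obtain i where i: "i < length es" "e = es!i" "inc endp (es!i) (vs!k)"
      by (metis (no_types, lifting) in_set_conv_nth mem_Collect_eq)
    then have "k = i \<or> k = Suc i" using walk_inc_idx[OF assms(1,2)] assms(3) by blast
    then show "e \<in> (if 0 < k then {es!(k-1)} else {}) \<union> (if k < length es then {es!k} else {})"
      using i by auto
  next
    fix e assume e: "e \<in> (if 0 < k then {es!(k-1)} else {}) \<union> (if k < length es then {es!k} else {})"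
    show "e \<in> {e\<in>set es. inc endp e (vs!k)}"
    proof (cases "0 < k \<and> e = es!(k-1)")
      case True
      have "k - 1 < length es" using assms(3) l True by auto
      then have "joins endp (es!(k-1)) (vs!(k-1)) (vs!Suc (k-1))"
        using assms(1) unfolding walk_in_def by blast
      then show ?thesis using True l assms(3) unfolding joins_def inc_def by auto
    next
      case False
      then have "k < length es" "e = es!k" using e by (auto split: if_splits)
      moreover have "joins endp (es!k) (vs!k) (vs!Suc k)"
        using assms(1) calculation unfolding walk_in_def by auto
      ultimately show ?thesis unfolding joins_def inc_def by auto
    qed
  qed
qed

lemma incs_parity:
  assumes "walk_in E endp vs es" "distinct vs" "hd vs = s" "last vs = t" "s \<noteq> t"
  shows "odd (card {e\<in>set es. inc endp e v}) \<longleftrightarrow> (v = s \<or> v = t)"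
proof -
  have l: "length vs = Suc (length es)" using assms(1) unfolding walk_in_def by auto
  have s0: "s = vs!0" using assms(3) l by (cases vs) auto
  have tl: "t = vs!(length es)" using assms(4) l by (metis last_conv_nth diff_Suc_1 list.size(3) nat.distinct(1))
  have ne: "es \<noteq> []" using s0 tl assms(5) by auto
  have de: "distinct es" using walk_distinct_es[OF assms(1,2)] .
  show ?thesis
  proof (cases "v \<in> set vs")
    case False
    then have "{e\<in>set es. inc endp e v} = {}" using walk_inc_in[OF assms(1)] by auto
    then have c: "card {e\<in>set es. inc endp e v} = 0" by simp
    have "s \<in> set vs" "t \<in> set vs" using s0 tl l by auto
    then have "v \<noteq> s" "v \<noteq> t" using False by auto
    then show ?thesis unfolding c by simp
  next
    case True
    then obtain k where k: "k < length vs" "v = vs!k" by (metis in_set_conv_nth)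
    note I = incs_at[OF assms(1,2) k(1)]
    show ?thesis
    proof (cases "k = 0")
      case True
      then show ?thesis using I k s0 ne by auto
    next
      case False
      show ?thesis
      proof (cases "k = length es")
        case True
        then show ?thesis using I k tl False by auto
      next
        case False2: False
        have kl: "k < length es" using k l False2 by auto
        have "es!(k-1) \<noteq> es!k" using de kl False by (simp add: nth_eq_iff_index_eq)
        then have c: "card {e\<in>set es. inc endp e v} = 2" using I k kl False by auto
        have "v \<noteq> s" using s0 k False assms(2) l by (simp add: nth_eq_iff_index_eq)
        moreover have "v \<noteq> t" using tl k False2 assms(2) l by (simp add: nth_eq_iff_index_eq)
        ultimately show ?thesis using c by auto
      qed
    qed
  qed
qed

lemma symdiff_other:
  assumes "finite A" "finite B" "even (card A + card B)" "e \<in> (A - B) \<union> (B - A)"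
  shows "\<exists>e'\<in>(A - B) \<union> (B - A). e' \<noteq> e"
proof (rule ccontr)
  assume "\<not> ?thesis"
  then have eq: "(A - B) \<union> (B - A) = {e}" using assms(4) by blast
  have "card A = card (A - B) + card (A \<inter> B)"
  proof -
    have "card A = card ((A - B) \<union> (A \<inter> B))" by (simp add: Un_Diff_Int)
    also have "\<dots> = card (A - B) + card (A \<inter> B)" using assms(1) by (intro card_Un_disjoint) auto
    finally show ?thesis .
  qed
  moreover have "card B = card (B - A) + card (A \<inter> B)"
  proof -
    have "card B = card ((B - A) \<union> (B \<inter> A))" by (simp add: Un_Diff_Int)
    also have "\<dots> = card (B - A) + card (B \<inter> A)" using assms(2) by (intro card_Un_disjoint) auto
    finally show ?thesis by (simp add: Int_commute)
  qed
  moreover have "card ((A - B) \<union> (B - A)) = card (A - B) + card (B - A)"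
    using assms(1,2) by (intro card_Un_disjoint) auto
  then have "card (A - B) + card (B - A) = 1" using eq by simp
  ultimately have "card A + card B = 1 + 2 * card (A \<inter> B)" by linarith
  then show False using assms(3) by simp
qed

lemma walk_snoc:
  assumes "walk_in E endp vs es" "e \<in> E" "joins endp e (last vs) w"
  shows "walk_in E endp (vs @ [w]) (es @ [e])"
proof -
  have l: "length vs = Suc (length es)" using assms(1) unfolding walk_in_def by auto
  have lv: "last vs = vs ! length es" using l by (metis last_conv_nth diff_Suc_1 list.size(3) nat.distinct(1))
  show ?thesis unfolding walk_in_def
  proof (intro conjI allI impI)
    show "length (vs @ [w]) = Suc (length (es @ [e]))" using l by simp
    show "set (es @ [e]) \<subseteq> E" using assms(1,2) unfolding walk_in_def by auto
    fix i assume i: "i < length (es @ [e])"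
    show "joins endp ((es @ [e]) ! i) ((vs @ [w]) ! i) ((vs @ [w]) ! Suc i)"
    proof (cases "i < length es")
      case True
      then show ?thesis using assms(1) l unfolding walk_in_def by (auto simp: nth_append)
    next
      case False
      then have "i = length es" using i by auto
      then show ?thesis using assms(3) l lv by (auto simp: nth_append)
    qed
  qed
qed

lemma cycle_from_D:
  assumes fin: "finite V"
    and D: "\<forall>e\<in>D. fst (endp e) \<in> V \<and> snd (endp e) \<in> V \<and> fst (endp e) \<noteq> snd (endp e)"
    and deg: "\<forall>e\<in>D. \<forall>v. inc endp e v \<longrightarrow> (\<exists>e'\<in>D. e' \<noteq> e \<and> inc endp e' v)"
    and "walk_in D endp vs es" "distinct vs" "set vs \<subseteq> V" "es \<noteq> []"
  shows "\<exists>vs es. set vs \<subseteq> V \<and> cycle_in D endp vs es"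
  using assms(4-)
proof (induction "card V - length vs" arbitrary: vs es rule: less_induct)
  case less
  have l: "length vs = Suc (length es)" using less.prems(1) unfolding walk_in_def by auto
  define v where "v = last vs"
  define e where "e = last es"
  have vn: "v = vs ! length es" using l v_def by (metis last_conv_nth diff_Suc_1 list.size(3) nat.distinct(1))
  have en: "e = es ! (length es - 1)" using e_def less.prems(4) by (simp add: last_conv_nth)
  have eD: "e \<in> D" using less.prems(1,4) e_def unfolding walk_in_def by auto
  have "length es - 1 < length es" using less.prems(4) by auto
  then have "joins endp (es!(length es - 1)) (vs!(length es - 1)) (vs!Suc (length es - 1))"
    using less.prems(1) unfolding walk_in_def by blast
  then have "joins endp e (vs!(length es - 1)) (vs!Suc (length es - 1))" using en by simp
  hence "inc endp e v" using vn less.prems(4) unfolding joins_def inc_def by auto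
  then obtain e' where e': "e' \<in> D" "e' \<noteq> e" "inc endp e' v" using deg eD by blast
  define w where "w = (if v = fst (endp e') then snd (endp e') else fst (endp e'))"
  have w: "joins endp e' v w"
    using e'(3) unfolding inc_def joins_def w_def by (cases "endp e'") auto
  have wv: "w \<noteq> v" and wV: "w \<in> V"
    using w D e'(1) unfolding joins_def by auto
  have e'nin: "e' \<notin> set es"
  proof
    assume "e' \<in> set es"
    then obtain m where m: "m < length es" "e' = es!m" by (metis in_set_conv_nth)
    have "length es = m \<or> length es = Suc m"
    proof -
      have "length es < length vs" using l by simp
      moreover have "inc endp (es!m) (vs ! length es)" using m e'(3) vn by simp
      ultimately show ?thesis using walk_inc_idx[OF less.prems(1,2) m(1)] by blast
    qed
    then have "m = length es - 1" using m by auto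
    then show False using m en e'(2) by auto
  qed
  show ?case
  proof (cases "w \<in> set vs")
    case False
    have wk: "walk_in D endp (vs @ [w]) (es @ [e'])"
      using walk_snoc[OF less.prems(1) e'(1)] w v_def by auto
    have dd: "distinct (vs @ [w])" using False less.prems(2) by auto
    have ss: "set (vs @ [w]) \<subseteq> V" using less.prems(3) wV by auto
    have "length (vs @ [w]) \<le> card V"
    proof -
      have "card (set (vs @ [w])) \<le> card V" using card_mono[OF fin ss] .
      then show ?thesis using distinct_card[OF dd] by simp
    qed
    then have "card V - length (vs @ [w]) < card V - length vs" by auto
    from less.hyps[OF this wk dd ss] show ?thesis by simp
  next
    case True
    then obtain j where j: "j < length vs" "w = vs!j" by (metis in_set_conv_nth)
    have jl: "j < length es" using j wv vn l by (metis less_antisym)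
    define cvs where "cvs = drop j vs @ [w]"
    define ces where "ces = drop j es @ [e']"
    have wk: "walk_in D endp cvs ces" unfolding walk_in_def
    proof (intro conjI allI impI)
      show "length cvs = Suc (length ces)" using l jl cvs_def ces_def by simp
      show "set ces \<subseteq> D" using less.prems(1) e'(1) ces_def set_drop_subset[of j es]
        unfolding walk_in_def by auto
      fix i assume i: "i < length ces"
      show "joins endp (ces ! i) (cvs ! i) (cvs ! Suc i)"
      proof (cases "i < length es - j")
        case True
        have iv: "Suc i < length vs - j" using True l by auto
        have "j + i < length es" using True by auto
        then have "joins endp (es!(j+i)) (vs!(j+i)) (vs!Suc (j+i))"
          using less.prems(1) unfolding walk_in_def by blast
        moreover have "ces ! i = es!(j+i)" using True jl ces_def by (simp add: nth_append)
        moreover have "cvs ! i = vs!(j+i)" using iv cvs_def by (simp add: nth_append)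
        moreover have "cvs ! Suc i = vs!Suc (j+i)" using iv cvs_def by (simp add: nth_append)
        ultimately show ?thesis by simp
      next
        case False
        then have ii: "i = length es - j" using i ces_def by auto
        have L1: "length (drop j vs) = Suc i" using ii l jl by simp
        have L2: "length (drop j es) = i" using ii by simp
        have "cvs ! i = drop j vs ! i" unfolding cvs_def using L1 by (simp add: nth_append)
        also have "\<dots> = vs ! (j + i)" using L1 by simp
        also have "j + i = length es" using ii jl by simp
        finally have c1: "cvs ! i = v" using vn by simp
        have c2: "cvs ! Suc i = w" unfolding cvs_def using L1 by (metis nth_append_length)
        have c3: "ces ! i = e'" unfolding ces_def using L2 by (metis nth_append_length)
        show ?thesis using w c1 c2 c3 by simp
      qed
    qed
    have "cycle_in D endp cvs ces" unfolding cycle_in_def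
    proof (intro conjI)
      show "walk_in D endp cvs ces" by (rule wk)
      show "ces \<noteq> []" using ces_def by simp
      show "hd cvs = last cvs" using cvs_def j by (simp add: hd_drop_conv_nth)
      show "distinct (butlast cvs)" using cvs_def less.prems(2) by simp
      have "e' \<notin> set (drop j es)" using e'nin set_drop_subset[of j es] by blast
      then show "distinct ces" using ces_def walk_distinct_es[OF less.prems(1,2)]
        by simp
    qed
    moreover have "set cvs \<subseteq> V" using cvs_def less.prems(3) wV set_drop_subset[of j vs] by auto
    ultimately show ?thesis by (intro exI conjI)
  qed
qed



lemma walk_tl:
  assumes "walk_in E endp (a # vs) (e # es)"
  shows "walk_in E endp vs es"
  unfolding walk_in_def
proof (intro conjI allI impI)
  show "length vs = Suc (length es)" using assms unfolding walk_in_def by simp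
  show "set es \<subseteq> E" using assms unfolding walk_in_def by simp
  fix i assume "i < length es"
  then have "Suc i < length (e # es)" by simp
  then have "joins endp ((e#es) ! Suc i) ((a#vs) ! Suc i) ((a#vs) ! Suc (Suc i))"
    using assms unfolding walk_in_def by blast
  then show "joins endp (es ! i) (vs ! i) (vs ! Suc i)" by simp
qed

lemma same_edges:
  assumes "walk_in E endp vs1 es1" "distinct vs1" "walk_in E endp vs2 es2" "distinct vs2"
    "hd vs1 = hd vs2" "last vs1 = last vs2" "set es1 = set es2"
  shows "vs1 = vs2 \<and> es1 = es2"
  using assms
proof (induction es1 arbitrary: vs1 vs2 es2)
  case Nil
  then have e2: "es2 = []" by simp
  have "length vs1 = 1" "length vs2 = 1" using Nil e2 unfolding walk_in_def by auto
  then obtain a b where "vs1 = [a]" "vs2 = [b]" by (metis One_nat_def length_0_conv length_Suc_conv)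
  then show ?case using Nil e2 by simp
next
  case (Cons e es1')
  have l1: "length vs1 = Suc (Suc (length es1'))" using Cons.prems(1) unfolding walk_in_def by simp
  then obtain a x r where v1: "vs1 = a # x # r" by (metis length_Suc_conv)
  have "es2 \<noteq> []" using Cons.prems(7) by auto
  then obtain g es2' where g: "es2 = g # es2'" by (metis list.exhaust)
  have l2: "length vs2 = Suc (Suc (length es2'))" using Cons.prems(3) g unfolding walk_in_def by simp
  then obtain b y r' where v2: "vs2 = b # y # r'" by (metis length_Suc_conv)
  have ab: "a = b" using Cons.prems(5) v1 v2 by simp
  have j1: "joins endp e a x" using Cons.prems(1) v1 unfolding walk_in_def by fastforce
  have j2: "joins endp g b y" using Cons.prems(3) v2 g unfolding walk_in_def by fastforce
  have "g \<in> set (e # es1')" using Cons.prems(7) g by simp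
  then obtain m where m: "m < length (e # es1')" "g = (e # es1') ! m" by (metis in_set_conv_nth)
  have "inc endp ((e # es1') ! m) (vs1 ! 0)" using j2 m ab v1 unfolding joins_def inc_def by auto
  then have "0 = m \<or> 0 = Suc m" using walk_inc_idx[OF Cons.prems(1,2) m(1), of 0] v1 by simp
  then have ge: "g = e" using m by simp
  have "a \<noteq> x" "b \<noteq> y" using Cons.prems(2,4) v1 v2 by auto
  then have xy: "x = y" using j1 j2 ge ab unfolding joins_def by auto
  have d1: "distinct (e # es1')" using walk_distinct_es[OF Cons.prems(1,2)] .
  have d2: "distinct (e # es2')" using walk_distinct_es[OF Cons.prems(3,4)] g ge by simp
  have ss: "set es1' = set es2'"
  proof -
    have "set es1' = set (e # es1') - {e}" using d1 by auto
    also have "\<dots> = set (e # es2') - {e}" using Cons.prems(7) g ge by simp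
    also have "\<dots> = set es2'" using d2 by auto
    finally show ?thesis .
  qed
  have w1: "walk_in E endp (x # r) es1'" using walk_tl Cons.prems(1) v1 by metis
  have w2: "walk_in E endp (y # r') es2'" using walk_tl Cons.prems(3) v2 g by metis
  have "x # r = y # r' \<and> es1' = es2'"
    using Cons.IH[OF w1 _ w2 _ _ _ ss] Cons.prems(2,4,6) v1 v2 xy by simp
  then show ?case using v1 v2 ab g ge by simp
qed

lemma single_vertex:
  assumes "distinct vs" "vs \<noteq> []" "hd vs = last vs"
  shows "length vs = 1"
proof (rule ccontr)
  assume "length vs \<noteq> 1"
  then have "length vs \<ge> 2" using assms(2) by (cases vs) (auto simp: Suc_le_eq)
  moreover have "hd vs = vs ! 0" using assms(2) by (simp add: hd_conv_nth)
  moreover have "last vs = vs ! (length vs - 1)" using assms(2) by (simp add: last_conv_nth)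
  ultimately have "vs ! 0 = vs ! (length vs - 1)" using assms(3) by simp
  then have "0 = length vs - 1" using assms(1) nth_eq_iff_index_eq \<open>length vs \<ge> 2\<close>
    by (metis diff_less length_greater_0_conv assms(2) zero_less_one)
  then show False using \<open>length vs \<ge> 2\<close> by simp
qed

lemma cycle_mono:
  assumes "cycle_in D endp vs es" "D \<subseteq> E'"
  shows "cycle_in E' endp vs es"
  using assms unfolding cycle_in_def walk_in_def by auto

theorem mainTheorem11:
  fixes V :: "'v set" and E :: "'e set" and endp :: "'e \<Rightarrow> 'v \<times> 'v"
    and s t :: 'v and F :: "'e set"
  assumes "wf_graph V E endp"
    and "s \<in> V" and "t \<in> V"
    and "reduced V E endp s t"
    and "feedback_edge_set V E endp F"
  shows "tracking_edge_set V E endp s t F"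
  unfolding tracking_edge_set_def
proof (intro conjI allI impI)
  show "F \<subseteq> E" using assms(5) unfolding feedback_edge_set_def by simp
  have acyc: "acyclic_graph V (E - F) endp" using assms(5) unfolding feedback_edge_set_def by simp
  have finV: "finite V" and EV: "\<forall>e\<in>E. fst (endp e) \<in> V \<and> snd (endp e) \<in> V"
    using assms(1) unfolding wf_graph_def by auto
  fix vs1 es1 vs2 es2
  assume H: "st_path V E endp s t vs1 es1 \<and> st_path V E endp s t vs2 es2 \<and> (vs1, es1) \<noteq> (vs2, es2)"
  show "filter (\<lambda>e. e \<in> F) es1 \<noteq> filter (\<lambda>e. e \<in> F) es2"
  proof
    assume feq: "filter (\<lambda>e. e \<in> F) es1 = filter (\<lambda>e. e \<in> F) es2"
    have w1: "walk_in E endp vs1 es1" and d1: "distinct vs1" and h1: "hd vs1 = s" and l1: "last vs1 = t"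
      and w2: "walk_in E endp vs2 es2" and d2: "distinct vs2" and h2: "hd vs2 = s" and l2: "last vs2 = t"
      and neq: "(vs1, es1) \<noteq> (vs2, es2)"
      using H unfolding st_path_def by auto
    have ne1: "vs1 \<noteq> []" and ne2: "vs2 \<noteq> []" using w1 w2 unfolding walk_in_def by auto
    show False
    proof (cases "s = t")
      case True
      have "length vs1 = 1" using single_vertex[OF d1 ne1] h1 l1 True by simp
      moreover have "length vs2 = 1" using single_vertex[OF d2 ne2] h2 l2 True by simp
      ultimately have "es1 = []" "es2 = []" using w1 w2 unfolding walk_in_def by auto
      moreover have "vs1 = [s]" using \<open>length vs1 = 1\<close> h1
        by (metis One_nat_def length_0_conv length_Suc_conv list.sel(1))
      moreover have "vs2 = [s]" using \<open>length vs2 = 1\<close> h2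
        by (metis One_nat_def length_0_conv length_Suc_conv list.sel(1))
      ultimately show False using neq by simp
    next
      case st: False
      define A where "A = set es1"
      define B where "B = set es2"
      define D where "D = (A - B) \<union> (B - A)"
      have AF: "A \<inter> F = B \<inter> F"
      proof -
        have "set (filter (\<lambda>e. e \<in> F) es1) = set (filter (\<lambda>e. e \<in> F) es2)" using feq by simp
        then show ?thesis unfolding A_def B_def by auto
      qed
      have DEF: "D \<subseteq> E - F"
        using AF w1 w2 unfolding D_def A_def B_def walk_in_def by blast
      show False
      proof (cases "D = {}")
        case True
        then have "A = B" unfolding D_def by auto
        then have "vs1 = vs2 \<and> es1 = es2"
          using same_edges[OF w1 d1 w2 d2] h1 h2 l1 l2 unfolding A_def B_def by simp
        then show False using neq by simp
      next
        case False
        then obtain e0 where e0: "e0 \<in> D" by auto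
        have Dprop: "\<forall>e\<in>D. fst (endp e) \<in> V \<and> snd (endp e) \<in> V \<and> fst (endp e) \<noteq> snd (endp e)"
        proof
          fix e assume "e \<in> D"
          then have "e \<in> E" "e \<in> set es1 \<or> e \<in> set es2" using DEF unfolding D_def A_def B_def by auto
          then show "fst (endp e) \<in> V \<and> snd (endp e) \<in> V \<and> fst (endp e) \<noteq> snd (endp e)"
            using EV walk_noloop[OF w1 d1] walk_noloop[OF w2 d2] by blast
        qed
        have deg: "\<forall>e\<in>D. \<forall>v. inc endp e v \<longrightarrow> (\<exists>e'\<in>D. e' \<noteq> e \<and> inc endp e' v)"
        proof (intro ballI allI impI)
          fix e v assume eD: "e \<in> D" and iv: "inc endp e v"
          define I1 where "I1 = {x\<in>set es1. inc endp x v}"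
          define I2 where "I2 = {x\<in>set es2. inc endp x v}"
          have p1: "odd (card I1) \<longleftrightarrow> (v = s \<or> v = t)"
            unfolding I1_def using incs_parity[OF w1 d1 h1 l1 st] .
          have p2: "odd (card I2) \<longleftrightarrow> (v = s \<or> v = t)"
            unfolding I2_def using incs_parity[OF w2 d2 h2 l2 st] .
          have ev: "even (card I1 + card I2)" using p1 p2 by auto
          have "e \<in> (I1 - I2) \<union> (I2 - I1)" using eD iv unfolding D_def A_def B_def I1_def I2_def by auto
          then obtain e' where "e' \<in> (I1 - I2) \<union> (I2 - I1)" "e' \<noteq> e"
            using symdiff_other[OF _ _ ev] unfolding I1_def I2_def by auto
          then show "\<exists>e'\<in>D. e' \<noteq> e \<and> inc endp e' v"
            unfolding D_def A_def B_def I1_def I2_def by auto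
        qed
        obtain a b where ab: "endp e0 = (a, b)" by fastforce
        have abn: "a \<noteq> b" "a \<in> V" "b \<in> V" using Dprop e0 ab by auto
        have wk: "walk_in D endp [a, b] [e0]"
          using e0 ab unfolding walk_in_def joins_def by simp
        obtain cvs ces where c: "set cvs \<subseteq> V" "cycle_in D endp cvs ces"
          using cycle_from_D[OF finV Dprop deg wk] abn by auto
        have "cycle_in (E - F) endp cvs ces" using cycle_mono[OF c(2) DEF] .
        then show False using acyc c(1) unfolding acyclic_graph_def by blast
      qed
    qed
  qed
qed

end
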